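(* Let $\mu$ be a differentiable growth rate and $\gamma\in\mathbb R$. If the system $x'=(A(t)-\gamma\frac{\mu'(t)}{\mu(t)}I)x$ admits a nonuniform $\mu$-dichotomy with invariant projections $P(t)$, then $\mathcal U_\gamma=\{(s,\xi):\xi\in\operatorname{Im}P(s)\}$, $\mathcal V_\gamma=\{(s,\xi):\xi\in\operatorname{Ker}P(s)\}$, and $\mathcal U_\gamma\oplus\mathcal V_\gamma=\mathbb R\times\mathbb R^n$.
   Context: Fix $n\ge1$ and a norm on $\mathbb R^n$ with induced operator norm. Let $A:\mathbb R\to M_n(\mathbb R)$ be continuous with evolution operator $\Phi(t,s)$. $\operatorname{sign}(s)\in\{-1,0,1\}$ is the sign of $s$. A growth rate is a strictly increasing $\mu:\mathbb R\to(0,\infty)$, $\mu(0)=1$, $\mu\to+\infty$ at $+\infty$, $\mu\to0$ at $-\infty$; differentiable growth rate if differentiable. A linear system $x'=C(t)x$ with evolution operator $\Psi$ admits a nonuniform $\mu$-dichotomy with invariant projections $P(t)$ if $P(t)$ are projections with $P(t)\Psi(t,s)=\Psi(t,s)P(s)$ for all $t,s$ and there are constants $K\ge1$, $\alpha<0$, $\beta>0$, $\theta,\nu\ge0$, $\alpha+\theta<0$, $\beta-\nu>0$ with ($Q=I-P$) $\|\Psi(t,s)P(s)\|\le K(\mu(t)/\mu(s))^{\alpha}\mu(s)^{\operatorname{sign}(s)\theta}$ for $t\ge s$ and $\|\Psi(t,s)Q(s)\|\le K(\mu(t)/\mu(s))^{\beta}\mu(s)^{\operatorname{sign}(s)\nu}$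 for $t\le s$. $\mathcal U_\gamma=\{(s,\xi):\sup_{t\ge0}\|\Phi(t,s)\xi\|\mu(t)^{-\gamma}<\infty\}$ and $\mathcal V_\gamma=\{(s,\xi):\sup_{t\le0}\|\Phi(t,s)\xi\|\mu(t)^{-\gamma}<\infty\}$ ($\Phi$ is the evolution operator of $x'=A(t)x$). The sum $\mathcal U\oplus\mathcal V$ of subsets of $\mathbb R\times\mathbb R^n$ is taken fiberwise: $\{(s,\xi):\xi\in\mathcal U(s)+\mathcal V(s)\}$ with $\mathcal U(s)\cap\mathcal V(s)=\{0\}$, where $\mathcal U(s)=\{\xi:(s,\xi)\in\mathcal U\}$. *)

theory Defs
  imports "HOL-Analysis.Analysis"
begin

definition is_norm :: "(real^'n \<Rightarrow> real) \<Rightarrow> bool" where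
  "is_norm N \<longleftrightarrow> (\<forall>x. 0 \<le> N x) \<and> (\<forall>x. N x = 0 \<longleftrightarrow> x = 0)
     \<and> (\<forall>c x. N (c *\<^sub>R x) = \<bar>c\<bar> * N x) \<and> (\<forall>x y. N (x + y) \<le> N x + N y)"

definition op_norm :: "(real^'n \<Rightarrow> real) \<Rightarrow> real^'n^'n \<Rightarrow> real" where
  "op_norm N M = (SUP x\<in>{x. N x = 1}. N (M *v x))"

definition growth_rate :: "(real \<Rightarrow> real) \<Rightarrow> bool" where
  "growth_rate \<mu> \<longleftrightarrow> strict_mono \<mu> \<and> (\<forall>t. 0 < \<mu> t) \<and> \<mu> 0 = 1
     \<and> filterlim \<mu> at_top at_top \<and> (\<mu> \<longlongrightarrow> 0) at_bot"

definition diff_growth_rate :: "(real \<Rightarrow> real) \<Rightarrow> bool" where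
  "diff_growth_rate \<mu> \<longleftrightarrow> growth_rate \<mu> \<and> (\<forall>t. \<mu> differentiable (at t))"

definition evolution_operator :: "(real \<Rightarrow> real^'n^'n) \<Rightarrow> (real \<Rightarrow> real \<Rightarrow> real^'n^'n) \<Rightarrow> bool" where
  "evolution_operator A \<Phi> \<longleftrightarrow> (\<forall>s. \<Phi> s s = mat 1)
     \<and> (\<forall>t s. ((\<lambda>\<tau>. \<Phi> \<tau> s) has_vector_derivative (A t ** \<Phi> t s)) (at t))"

definition mu_dichotomy :: "(real^'n \<Rightarrow> real) \<Rightarrow> (real \<Rightarrow> real) \<Rightarrow> (real \<Rightarrow> real \<Rightarrow> real^'n^'n)
    \<Rightarrow> (real \<Rightarrow> real^'n^'n) \<Rightarrow> bool" where
  "mu_dichotomy N \<mu> \<Psi> P \<longleftrightarrow>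
     (\<forall>t. P t ** P t = P t) \<and> (\<forall>t s. P t ** \<Psi> t s = \<Psi> t s ** P s) \<and>
     (\<exists>K \<alpha> \<beta> \<theta> \<nu>. K \<ge> 1 \<and> \<alpha> < 0 \<and> \<beta> > 0 \<and> \<theta> \<ge> 0 \<and> \<nu> \<ge> 0 \<and> \<alpha> + \<theta> < 0 \<and> \<beta> - \<nu> > 0 \<and>
        (\<forall>t s. t \<ge> s \<longrightarrow> op_norm N (\<Psi> t s ** P s)
            \<le> K * (\<mu> t / \<mu> s) powr \<alpha> * \<mu> s powr (sgn s * \<theta>)) \<and>
        (\<forall>t s. t \<le> s \<longrightarrow> op_norm N (\<Psi> t s ** (mat 1 - P s))
            \<le> K * (\<mu> t / \<mu> s) powr \<beta> * \<mu> s powr (sgn s * \<nu>)))"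

definition U_set :: "(real^'n \<Rightarrow> real) \<Rightarrow> (real \<Rightarrow> real) \<Rightarrow> (real \<Rightarrow> real \<Rightarrow> real^'n^'n) \<Rightarrow> real
    \<Rightarrow> (real \<times> (real^'n)) set" where
  "U_set N \<mu> \<Phi> \<gamma> = {(s, \<xi>). \<exists>C. \<forall>t\<ge>0. N (\<Phi> t s *v \<xi>) * \<mu> t powr (-\<gamma>) \<le> C}"

definition V_set :: "(real^'n \<Rightarrow> real) \<Rightarrow> (real \<Rightarrow> real) \<Rightarrow> (real \<Rightarrow> real \<Rightarrow> real^'n^'n) \<Rightarrow> real
    \<Rightarrow> (real \<times> (real^'n)) set" where
  "V_set N \<mu> \<Phi> \<gamma> = {(s, \<xi>). \<exists>C. \<forall>t\<le>0. N (\<Phi> t s *v \<xi>) * \<mu> t powr (-\<gamma>) \<le> C}"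

definition fiber :: "(real \<times> 'a) set \<Rightarrow> real \<Rightarrow> 'a set" where
  "fiber U s = {\<xi>. (s, \<xi>) \<in> U}"

definition fib_dsum :: "(real \<times> 'a::ab_group_add) set \<Rightarrow> (real \<times> 'a) set \<Rightarrow> (real \<times> 'a) set" where
  "fib_dsum U V = {(s, \<xi>). \<xi> \<in> {u + v | u v. u \<in> fiber U s \<and> v \<in> fiber V s}
                          \<and> fiber U s \<inter> fiber V s = {0}}"

end

theory Submission
  imports Defs
begin


lemma isn_zero: "is_norm N \<Longrightarrow> N 0 = 0" by (simp add: is_norm_def)
lemma isn_scale: "is_norm N \<Longrightarrow> N (c *\<^sub>R x) = \<bar>c\<bar> * N x" by (simp add: is_norm_def)
lemma isn_tri: "is_norm N \<Longrightarrow> N (x + y) \<le> N x + N y" by (simp add: is_norm_def)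
lemma isn_nonneg: "is_norm N \<Longrightarrow> 0 \<le> N x" by (simp add: is_norm_def)
lemma isn_eq0: "is_norm N \<Longrightarrow> N x = 0 \<longleftrightarrow> x = 0" by (simp add: is_norm_def)
lemma isn_minus: "is_norm N \<Longrightarrow> N (x - y) = N (y - x)"
  using isn_scale[of N "-1" "y - x"] by simp
lemma isn_sum: assumes N: "is_norm N" and "finite S" shows "N (\<Sum>i\<in>S. f i) \<le> (\<Sum>i\<in>S. N (f i))"
  using \<open>finite S\<close>
proof (induction S rule: finite_induct)
  case empty then show ?case by (simp add: isn_zero[OF N])
next
  case (insert a S)
  then show ?case using isn_tri[OF N, of "f a" "sum f S"] by simp
qed

lemma norm_upper:
  fixes N :: "real^'n \<Rightarrow> real"
  assumes "is_norm N" shows "\<exists>C>0. \<forall>x. N x \<le> C * norm x"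
proof -
  define C where "C = 1 + (\<Sum>b\<in>Basis. N (b::real^'n))"
  have C0: "C > 0" unfolding C_def using isn_nonneg[OF assms] by (simp add: add_pos_nonneg sum_nonneg)
  have "N x \<le> C * norm x" for x
  proof -
    have "N x = N (\<Sum>b\<in>Basis. (x \<bullet> b) *\<^sub>R b)" by (metis euclidean_representation)
    also have "\<dots> \<le> (\<Sum>b\<in>Basis. N ((x \<bullet> b) *\<^sub>R b))" by (rule isn_sum[OF assms]) simp
    also have "\<dots> = (\<Sum>b\<in>Basis. \<bar>x \<bullet> b\<bar> * N b)" by (simp add: isn_scale[OF assms])
    also have "\<dots> \<le> (\<Sum>b\<in>Basis. norm x * N b)"
      by (rule sum_mono) (simp add: Basis_le_norm isn_nonneg[OF assms] mult_right_mono)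
    also have "\<dots> \<le> C * norm x" unfolding C_def by (simp add: sum_distrib_left[symmetric] distrib_right)
    finally show ?thesis .
  qed
  with C0 show ?thesis by blast
qed

lemma norm_lower:
  fixes N :: "real^'n \<Rightarrow> real"
  assumes N: "is_norm N" shows "\<exists>c>0. \<forall>x. c * norm x \<le> N x"
proof -
  obtain C where C: "C > 0" "\<And>x. N x \<le> C * norm x" using norm_upper[OF N] by blast
  have lip: "\<bar>N x - N y\<bar> \<le> C * norm (x - y)" for x y
  proof -
    have "N x \<le> N (x - y) + N y" using isn_tri[OF N, of "x - y" y] by simp
    moreover have "N y \<le> N (y - x) + N x" using isn_tri[OF N, of "y - x" x] by simp
    moreover have "N (y - x) = N (x - y)" using isn_minus[OF N] by simp
    ultimately show ?thesis using C(2)[of "x - y"] by linarith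
  qed
  have cont: "continuous_on UNIV N"
    unfolding continuous_on_iff
  proof (intro ballI allI impI)
    fix x and e :: real assume "e > 0"
    show "\<exists>d>0. \<forall>x'\<in>UNIV. dist x' x < d \<longrightarrow> dist (N x') (N x) < e"
    proof (intro exI[of _ "e / C"] conjI ballI impI)
      show "e / C > 0" using \<open>e > 0\<close> C by simp
      fix x' assume "dist x' x < e / C"
      hence "C * norm (x' - x) < e" using C by (simp add: dist_norm field_simps)
      thus "dist (N x') (N x) < e" using lip[of x' x] by (simp add: dist_real_def)
    qed
  qed
  obtain b :: "real^'n" where b: "b \<in> Basis" using nonempty_Basis by blast
  have ne: "sphere (0::real^'n) 1 \<noteq> {}" using b by (auto intro!: exI[of _ b])
  obtain x0 where x0: "x0 \<in> sphere 0 1" "\<And>y. y \<in> sphere 0 1 \<Longrightarrow> N x0 \<le> N y"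
    using continuous_attains_inf[OF compact_sphere ne continuous_on_subset[OF cont]] by blast
  have m: "N x0 > 0" using x0(1) isn_nonneg[OF N, of x0] isn_eq0[OF N, of x0] by auto
  have "N x0 * norm x \<le> N x" for x
  proof (cases "x = 0")
    case True then show ?thesis by (simp add: isn_zero[OF N])
  next
    case False
    have "N x0 \<le> N ((1 / norm x) *\<^sub>R x)" using x0(2) False by simp
    also have "\<dots> = N x / norm x" by (simp add: isn_scale[OF N])
    finally show ?thesis using False by (simp add: field_simps)
  qed
  with m show ?thesis by blast
qed

lemma op_norm_bound:
  fixes N :: "real^'n \<Rightarrow> real"
  assumes N: "is_norm N" shows "N (M *v x) \<le> op_norm N M * N x"
proof -
  obtain C where C: "C > 0" "\<And>x. N x \<le> C * norm x" using norm_upper[OF N] by blast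
  obtain c where c: "c > 0" "\<And>x. c * norm x \<le> N x" using norm_lower[OF N] by blast
  obtain K where K: "K \<ge> 0" "\<And>x. norm (M *v x) \<le> norm x * K"
    using bounded_linear.nonneg_bounded[OF matrix_vector_mul_bounded_linear[of M]] by blast
  have bdd: "bdd_above ((\<lambda>y. N (M *v y)) ` {y. N y = 1})"
  proof (rule bdd_aboveI2)
    fix y assume "y \<in> {y. N y = 1}"
    hence "norm y \<le> 1 / c" using c(2)[of y] c(1) by (simp add: field_simps)
    hence "norm y * K \<le> 1 / c * K" using K(1) by (rule mult_right_mono)
    hence "norm (M *v y) \<le> K / c" using K(2)[of y] by simp
    hence "C * norm (M *v y) \<le> C * (K / c)" using C(1) by (intro mult_left_mono) auto
    thus "N (M *v y) \<le> C * (K / c)" using C(2)[of "M *v y"] by linarith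
  qed
  show ?thesis
  proof (cases "x = 0")
    case True then show ?thesis by (simp add: isn_zero[OF N])
  next
    case False
    have Nx: "N x > 0" using False isn_nonneg[OF N, of x] isn_eq0[OF N, of x] by auto
    define y where "y = (1 / N x) *\<^sub>R x"
    have Ny: "N y = 1" using Nx by (simp add: y_def isn_scale[OF N])
    have "N (M *v x) / N x = N (M *v y)"
      using Nx by (simp add: y_def matrix_vector_mult_scaleR isn_scale[OF N])
    also have "\<dots> \<le> op_norm N M" unfolding op_norm_def
      by (rule cSUP_upper[OF _ bdd]) (simp add: Ny)
    finally show ?thesis using Nx by (simp add: field_simps)
  qed
qed




lemma mv_bound:
  fixes M :: "real^'n^'m"
  shows "norm (M *v y) \<le> real CARD('m) * real CARD('n) * norm M * norm y"
proof -
  have "\<bar>M $ i $ j\<bar> \<le> norm M" for i j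
    using component_le_norm_cart[of "M$i" j] Finite_Cartesian_Product.norm_nth_le[of M i] by linarith
  hence "onorm ((*v) M) \<le> real CARD('m) * real CARD('n) * norm M"
    by (rule onorm_le_matrix_component)
  moreover have "norm (M *v y) \<le> onorm ((*v) M) * norm y"
    by (rule onorm) simp
  ultimately show ?thesis by (meson mult_right_mono norm_ge_zero order_trans)
qed

lemma inner_deriv:
  assumes "(x has_vector_derivative v) (at t)"
  shows "((\<lambda>\<tau>. x \<tau> \<bullet> x \<tau>) has_real_derivative 2 * (x t \<bullet> v)) (at t)"
proof -
  have dx: "(x has_derivative (\<lambda>h. h *\<^sub>R v)) (at t)" using assms by (simp add: has_vector_derivative_def)
  have "((\<lambda>\<tau>. x \<tau> \<bullet> x \<tau>) has_derivative (\<lambda>h. x t \<bullet> (h *\<^sub>R v) + (h *\<^sub>R v) \<bullet> x t)) (at t)"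
    by (rule has_derivative_inner[OF dx dx])
  thus ?thesis
    by (rule has_derivative_imp_has_field_derivative) (simp add: inner_commute algebra_simps)
qed

lemma ode_unique:
  fixes A :: "real \<Rightarrow> real^'n^'n" and x :: "real \<Rightarrow> real^'n"
  assumes cA: "continuous_on UNIV A"
    and d: "\<And>t. (x has_vector_derivative (A t *v x t)) (at t)"
    and x0: "x s = 0"
  shows "x t = 0"
proof -
  let ?S = "closed_segment s t"
  have "compact (A ` ?S)" by (rule compact_continuous_image[OF continuous_on_subset[OF cA]]) auto
  then obtain B where B: "\<And>\<tau>. \<tau> \<in> ?S \<Longrightarrow> norm (A \<tau>) \<le> B"
    using compact_imp_bounded bounded_iff by (metis image_eqI)
  define L where "L = real CARD('n) * real CARD('n) * \<bar>B\<bar>"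
  have L0: "L \<ge> 0" by (simp add: L_def)
  have AL: "norm (A \<tau> *v y) \<le> L * norm y" if "\<tau> \<in> ?S" for \<tau> y
  proof -
    have "norm (A \<tau> *v y) \<le> real CARD('n) * real CARD('n) * norm (A \<tau>) * norm y" by (rule mv_bound)
    also have "\<dots> \<le> L * norm y" unfolding L_def using B[OF that]
      by (intro mult_right_mono mult_left_mono) auto
    finally show ?thesis .
  qed
  have IL: "\<bar>x \<tau> \<bullet> (A \<tau> *v x \<tau>)\<bar> \<le> L * (x \<tau> \<bullet> x \<tau>)" if "\<tau> \<in> ?S" for \<tau>
  proof -
    have "\<bar>x \<tau> \<bullet> (A \<tau> *v x \<tau>)\<bar> \<le> norm (x \<tau>) * norm (A \<tau> *v x \<tau>)" by (rule Cauchy_Schwarz_ineq2)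
    also have "\<dots> \<le> norm (x \<tau>) * (L * norm (x \<tau>))" by (rule mult_left_mono[OF AL[OF that]]) simp
    also have "\<dots> = L * (x \<tau> \<bullet> x \<tau>)" by (simp add: power2_norm_eq_inner[symmetric] power2_eq_square)
    finally show ?thesis .
  qed
  have xx: "x t \<bullet> x t = 0"
  proof (cases "s \<le> t")
    case True
    define h where "h \<tau> = exp (-2 * L * \<tau>) * (x \<tau> \<bullet> x \<tau>)" for \<tau>
    have "h t \<le> h s"
    proof (rule DERIV_nonpos_imp_nonincreasing[OF True])
      fix \<tau> assume "s \<le> \<tau>" "\<tau> \<le> t"
      hence S: "\<tau> \<in> ?S" by (simp add: closed_segment_eq_real_ivl True)
      have "(h has_real_derivative
          exp (-2 * L * \<tau>) * (2 * (x \<tau> \<bullet> (A \<tau> *v x \<tau>))) + (-2 * L) * exp (-2 * L * \<tau>) * (x \<tau> \<bullet> x \<tau>)) (at \<tau>)"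
        unfolding h_def
        by (rule derivative_eq_intros inner_deriv[OF d] refl | simp)+
      moreover have "exp (-2 * L * \<tau>) * (2 * (x \<tau> \<bullet> (A \<tau> *v x \<tau>))) + (-2 * L) * exp (-2 * L * \<tau>) * (x \<tau> \<bullet> x \<tau>) \<le> 0"
        using IL[OF S] by (simp add: algebra_simps abs_le_iff mult_left_mono)
      ultimately show "\<exists>y. (h has_real_derivative y) (at \<tau>) \<and> y \<le> 0" by blast
    qed
    hence "exp (-2 * L * t) * (x t \<bullet> x t) \<le> 0" by (simp add: h_def x0)
    hence "x t \<bullet> x t \<le> 0" by (simp add: mult_le_0_iff)
    with inner_ge_zero[of "x t"] show ?thesis by linarith
  next
    case False
    hence ts: "t \<le> s" by simp
    define h where "h \<tau> = exp (2 * L * \<tau>) * (x \<tau> \<bullet> x \<tau>)" for \<tau>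
    have "h t \<le> h s"
    proof (rule DERIV_nonneg_imp_nondecreasing[OF ts])
      fix \<tau> assume "t \<le> \<tau>" "\<tau> \<le> s"
      hence S: "\<tau> \<in> ?S" by (simp add: closed_segment_eq_real_ivl ts)
      have "(h has_real_derivative
          exp (2 * L * \<tau>) * (2 * (x \<tau> \<bullet> (A \<tau> *v x \<tau>))) + (2 * L) * exp (2 * L * \<tau>) * (x \<tau> \<bullet> x \<tau>)) (at \<tau>)"
        unfolding h_def
        by (rule derivative_eq_intros inner_deriv[OF d] refl | simp)+
      moreover have "0 \<le> exp (2 * L * \<tau>) * (x \<tau> \<bullet> (A \<tau> *v x \<tau>) + L * (x \<tau> \<bullet> x \<tau>))"
        using IL[OF S] by (intro mult_nonneg_nonneg) (auto simp: abs_le_iff)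
      hence "exp (2 * L * \<tau>) * (2 * (x \<tau> \<bullet> (A \<tau> *v x \<tau>))) + (2 * L) * exp (2 * L * \<tau>) * (x \<tau> \<bullet> x \<tau>) \<ge> 0"
        by (simp add: algebra_simps)
      ultimately show "\<exists>y. (h has_real_derivative y) (at \<tau>) \<and> y \<ge> 0" by blast
    qed
    hence "exp (2 * L * t) * (x t \<bullet> x t) \<le> 0" by (simp add: h_def x0)
    hence "x t \<bullet> x t \<le> 0" by (simp add: mult_le_0_iff)
    with inner_ge_zero[of "x t"] show ?thesis by linarith
  qed
  thus ?thesis by simp
qed




lemma blin_mv: "bounded_linear (\<lambda>M::real^'n^'m. M *v v)"
proof -
  have "linear (\<lambda>M::real^'n^'m. M *v v)"
    by (rule linearI) (simp_all add: matrix_vector_mult_add_rdistrib scaleR_matrix_vector_assoc)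
  thus ?thesis by (simp add: linear_conv_bounded_linear)
qed

lemma evo_vec:
  assumes "evolution_operator A \<Phi>"
  shows "((\<lambda>\<tau>. \<Phi> \<tau> s *v v) has_vector_derivative A t *v (\<Phi> t s *v v)) (at t)"
proof -
  have "((\<lambda>\<tau>. \<Phi> \<tau> s) has_vector_derivative (A t ** \<Phi> t s)) (at t)"
    using assms by (simp add: evolution_operator_def)
  from bounded_linear.has_vector_derivative[OF blin_mv this, of v]
  show ?thesis by (simp add: matrix_vector_mul_assoc)
qed

lemma evo_id: "evolution_operator A \<Phi> \<Longrightarrow> \<Phi> s s = mat 1"
  by (simp add: evolution_operator_def)

lemma cocycle:
  assumes cA: "continuous_on UNIV A" and E: "evolution_operator A \<Phi>"
  shows "\<Phi> t s = \<Phi> t r ** \<Phi> r s"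
proof -
  have "\<Phi> t s *v v = (\<Phi> t r ** \<Phi> r s) *v v" for v
  proof -
    define x where "x \<tau> = \<Phi> \<tau> s *v v - \<Phi> \<tau> r *v (\<Phi> r s *v v)" for \<tau>
    have "x t = 0"
    proof (rule ode_unique[OF cA, of x r])
      fix \<tau>
      show "(x has_vector_derivative A \<tau> *v x \<tau>) (at \<tau>)"
        unfolding x_def using has_vector_derivative_diff[OF evo_vec[OF E, of s v \<tau>] evo_vec[OF E, of r "\<Phi> r s *v v" \<tau>]]
        by (simp add: matrix_vector_mult_diff_distrib)
      show "x r = 0" by (simp add: x_def evo_id[OF E])
    qed
    thus ?thesis by (simp add: x_def matrix_vector_mul_assoc)
  qed
  thus ?thesis by (simp add: matrix_eq)
qed

lemma cocycle_inv:
  assumes cA: "continuous_on UNIV A" and E: "evolution_operator A \<Phi>"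
  shows "\<Phi> s t ** \<Phi> t s = mat 1"
  using cocycle[OF cA E, of s s t] evo_id[OF E] by simp

lemma scaled:
  assumes cA: "continuous_on UNIV A" and E: "evolution_operator A \<Phi>"
    and mu: "diff_growth_rate \<mu>"
    and E2: "evolution_operator (\<lambda>t. A t - (\<gamma> * deriv \<mu> t / \<mu> t) *\<^sub>R mat 1) \<Psi>"
  shows "\<Psi> t s = (\<mu> s powr \<gamma> / \<mu> t powr \<gamma>) *\<^sub>R \<Phi> t s"
proof -
  have pos: "\<And>t. \<mu> t > 0" using mu by (simp add: diff_growth_rate_def growth_rate_def)
  have dmu: "\<And>t. (\<mu> has_real_derivative deriv \<mu> t) (at t)"
    using mu by (simp add: diff_growth_rate_def DERIV_deriv_iff_real_differentiable)
  have "\<Psi> t s *v v = (\<mu> s powr \<gamma> / \<mu> t powr \<gamma>) *\<^sub>R (\<Phi> t s *v v)" for v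
  proof -
    define x where "x \<tau> = \<mu> \<tau> powr \<gamma> *\<^sub>R (\<Psi> \<tau> s *v v) - \<mu> s powr \<gamma> *\<^sub>R (\<Phi> \<tau> s *v v)" for \<tau>
    have "x t = 0"
    proof (rule ode_unique[OF cA, of x s])
      fix \<tau>
      let ?c = "\<gamma> * deriv \<mu> \<tau> / \<mu> \<tau>"
      have d1: "((\<lambda>\<tau>. \<mu> \<tau> powr \<gamma>) has_real_derivative \<gamma> * \<mu> \<tau> powr (\<gamma> - 1) * deriv \<mu> \<tau>) (at \<tau>)"
        using DERIV_fun_powr[OF dmu[of \<tau>] pos[of \<tau>], of \<gamma>] by simp
      have d2: "((\<lambda>\<tau>. \<Psi> \<tau> s *v v) has_vector_derivative (A \<tau> *v (\<Psi> \<tau> s *v v) - ?c *\<^sub>R (\<Psi> \<tau> s *v v))) (at \<tau>)"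
        using evo_vec[OF E2, of s v \<tau>]
        by (simp add: matrix_vector_mult_diff_rdistrib scaleR_matrix_vector_assoc[symmetric])
      have d3: "((\<lambda>\<tau>. \<mu> s powr \<gamma> *\<^sub>R (\<Phi> \<tau> s *v v)) has_vector_derivative \<mu> s powr \<gamma> *\<^sub>R (A \<tau> *v (\<Phi> \<tau> s *v v))) (at \<tau>)"
        by (rule bounded_linear.has_vector_derivative[OF bounded_linear_scaleR_right evo_vec[OF E]])
      have eq: "\<gamma> * \<mu> \<tau> powr (\<gamma> - 1) * deriv \<mu> \<tau> = \<mu> \<tau> powr \<gamma> * ?c"
        using pos[of \<tau>] by (simp add: powr_diff field_simps)
      have "(x has_vector_derivative
         (\<mu> \<tau> powr \<gamma> *\<^sub>R (A \<tau> *v (\<Psi> \<tau> s *v v) - ?c *\<^sub>R (\<Psi> \<tau> s *v v)) + (\<gamma> * \<mu> \<tau> powr (\<gamma> - 1) * deriv \<mu> \<tau>) *\<^sub>R (\<Psi> \<tau> s *v v))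
          - \<mu> s powr \<gamma> *\<^sub>R (A \<tau> *v (\<Phi> \<tau> s *v v))) (at \<tau>)"
        unfolding x_def by (intro has_vector_derivative_diff has_vector_derivative_scaleR d1 d2 d3)
      moreover have "(\<mu> \<tau> powr \<gamma> *\<^sub>R (A \<tau> *v (\<Psi> \<tau> s *v v) - ?c *\<^sub>R (\<Psi> \<tau> s *v v)) + (\<gamma> * \<mu> \<tau> powr (\<gamma> - 1) * deriv \<mu> \<tau>) *\<^sub>R (\<Psi> \<tau> s *v v))
          - \<mu> s powr \<gamma> *\<^sub>R (A \<tau> *v (\<Phi> \<tau> s *v v)) = A \<tau> *v x \<tau>"
        unfolding eq x_def by (simp add: algebra_simps)
      ultimately show "(x has_vector_derivative A \<tau> *v x \<tau>) (at \<tau>)" by simp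
      show "x s = 0" by (simp add: x_def evo_id[OF E] evo_id[OF E2])
    qed
    hence h: "\<mu> t powr \<gamma> *\<^sub>R (\<Psi> t s *v v) = \<mu> s powr \<gamma> *\<^sub>R (\<Phi> t s *v v)" by (simp add: x_def)
    have "\<Psi> t s *v v = (1 / \<mu> t powr \<gamma>) *\<^sub>R (\<mu> t powr \<gamma> *\<^sub>R (\<Psi> t s *v v))"
      using pos[of t] by simp
    also have "\<dots> = (\<mu> s powr \<gamma> / \<mu> t powr \<gamma>) *\<^sub>R (\<Phi> t s *v v)" unfolding h by simp
    finally show ?thesis .
  qed
  thus ?thesis by (simp add: matrix_eq scaleR_matrix_vector_assoc)
qed




lemma ex_bound_scale:
  assumes "a > (0::real)"
  shows "(\<exists>C. \<forall>t\<in>T. a * f t \<le> C) \<longleftrightarrow> (\<exists>C. \<forall>t\<in>T. f t \<le> C)"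
proof
  assume "\<exists>C. \<forall>t\<in>T. a * f t \<le> C"
  then obtain C where "\<forall>t\<in>T. a * f t \<le> C" by blast
  hence "\<forall>t\<in>T. f t \<le> C / a" using assms by (simp add: pos_le_divide_eq mult.commute)
  thus "\<exists>C. \<forall>t\<in>T. f t \<le> C" by blast
next
  assume "\<exists>C. \<forall>t\<in>T. f t \<le> C"
  then obtain C where "\<forall>t\<in>T. f t \<le> C" by blast
  hence "\<forall>t\<in>T. a * f t \<le> a * C" using assms by (simp add: mult_left_mono)
  thus "\<exists>C. \<forall>t\<in>T. a * f t \<le> C" by blast
qed

lemma isn_diff: "is_norm N \<Longrightarrow> N (x - y) \<le> N x + N y"
  using isn_tri[of N x "-y"] isn_scale[of N "-1" y] by simp

lemma bounded_interval_N:
  assumes N: "is_norm N" and E: "evolution_operator B \<Psi>"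
  shows "\<exists>C. \<forall>\<tau>\<in>{a..b}. N (\<Psi> \<tau> s *v \<xi>) \<le> C"
proof -
  obtain C where C: "C > 0" "\<And>x. N x \<le> C * norm x" using norm_upper[OF N] by blast
  have "continuous_on {a..b} (\<lambda>\<tau>. \<Psi> \<tau> s *v \<xi>)"
    by (rule continuous_on_vector_derivative) (rule has_vector_derivative_at_within[OF evo_vec[OF E]])
  hence "compact ((\<lambda>\<tau>. \<Psi> \<tau> s *v \<xi>) ` {a..b})" by (rule compact_continuous_image) simp
  then obtain M where M0: "\<forall>y\<in>(\<lambda>\<tau>. \<Psi> \<tau> s *v \<xi>) ` {a..b}. norm y \<le> M"
    using compact_imp_bounded bounded_iff by blast
  have M: "\<And>\<tau>. \<tau> \<in> {a..b} \<Longrightarrow> norm (\<Psi> \<tau> s *v \<xi>) \<le> M" using M0 by blast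
  have "N (\<Psi> \<tau> s *v \<xi>) \<le> C * M" if "\<tau> \<in> {a..b}" for \<tau>
    using C(2)[of "\<Psi> \<tau> s *v \<xi>"] mult_left_mono[OF M[OF that], of C] C(1) by linarith
  thus ?thesis by blast
qed

theorem mainTheorem5:
  fixes N :: "real^'n \<Rightarrow> real"
    and A :: "real \<Rightarrow> real^'n^'n"
    and \<Phi> \<Psi> :: "real \<Rightarrow> real \<Rightarrow> real^'n^'n"
    and P :: "real \<Rightarrow> real^'n^'n"
    and \<mu> :: "real \<Rightarrow> real" and \<gamma> :: real
  assumes "is_norm N"
    and "continuous_on UNIV A"
    and "evolution_operator A \<Phi>"
    and "diff_growth_rate \<mu>"
    and "evolution_operator (\<lambda>t. A t - (\<gamma> * deriv \<mu> t / \<mu> t) *\<^sub>R mat 1) \<Psi>"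
    and "mu_dichotomy N \<mu> \<Psi> P"
  shows "U_set N \<mu> \<Phi> \<gamma> = {(s, \<xi>). \<xi> \<in> range (\<lambda>x. P s *v x)}
     \<and> V_set N \<mu> \<Phi> \<gamma> = {(s, \<xi>). P s *v \<xi> = 0}
     \<and> fib_dsum (U_set N \<mu> \<Phi> \<gamma>) (V_set N \<mu> \<Phi> \<gamma>) = UNIV"
proof -
  note N = assms(1) and cA = assms(2) and E = assms(3) and mu = assms(4) and E2 = assms(5)
  have pos: "\<And>t. \<mu> t > 0" using mu by (simp add: diff_growth_rate_def growth_rate_def)
  have smono: "strict_mono \<mu>" using mu by (simp add: diff_growth_rate_def growth_rate_def)
  have mono: "\<And>s t. s \<le> t \<Longrightarrow> \<mu> s \<le> \<mu> t" using smono by (simp add: strict_mono_less_eq)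
  have lim_top: "filterlim \<mu> at_top at_top" using mu by (simp add: diff_growth_rate_def growth_rate_def)
  have lim_bot: "(\<mu> \<longlongrightarrow> 0) at_bot" using mu by (simp add: diff_growth_rate_def growth_rate_def)
  have idem: "\<And>t. P t ** P t = P t" and inv: "\<And>t s. P t ** \<Psi> t s = \<Psi> t s ** P s"
    using assms(6) by (simp_all add: mu_dichotomy_def)
  obtain K \<alpha> \<beta> \<theta> \<nu> where K: "K \<ge> 1" and al: "\<alpha> < 0" and be: "\<beta> > 0" and th: "\<theta> \<ge> 0" and nu: "\<nu> \<ge> 0"
    and at: "\<alpha> + \<theta> < 0" and bn: "\<beta> - \<nu> > 0"
    and dP: "\<And>t s. t \<ge> s \<Longrightarrow> op_norm N (\<Psi> t s ** P s) \<le> K * (\<mu> t / \<mu> s) powr \<alpha> * \<mu> s powr (sgn s * \<theta>)"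
    and dQ: "\<And>t s. t \<le> s \<Longrightarrow> op_norm N (\<Psi> t s ** (mat 1 - P s)) \<le> K * (\<mu> t / \<mu> s) powr \<beta> * \<mu> s powr (sgn s * \<nu>)"
    using assms(6) unfolding mu_dichotomy_def by blast
  have Pidem: "P s *v (P s *v x) = P s *v x" for s x by (simp add: matrix_vector_mul_assoc idem)
  have Pinv: "P t *v (\<Psi> t s *v x) = \<Psi> t s *v (P s *v x)" for t s x
    by (simp add: matrix_vector_mul_assoc inv)
  have psi_v: "\<Psi> t s *v x = (\<mu> s powr \<gamma> / \<mu> t powr \<gamma>) *\<^sub>R (\<Phi> t s *v x)" for t s x
    by (simp add: scaled[OF cA E mu E2, of t s] scaleR_matrix_vector_assoc[symmetric])
  have Psinv: "\<Psi> s t *v (\<Psi> t s *v w) = w" for s t w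
  proof -
    have "\<Psi> s t *v (\<Psi> t s *v w) = (\<mu> s powr \<gamma> / \<mu> t powr \<gamma>) *\<^sub>R (\<Psi> s t *v (\<Phi> t s *v w))"
      unfolding psi_v[of t s w] by (rule matrix_vector_mult_scaleR)
    also have "\<Psi> s t *v (\<Phi> t s *v w) = (\<mu> t powr \<gamma> / \<mu> s powr \<gamma>) *\<^sub>R (\<Phi> s t *v (\<Phi> t s *v w))"
      by (rule psi_v)
    also have "\<Phi> s t *v (\<Phi> t s *v w) = w"
      by (simp add: matrix_vector_mul_assoc cocycle_inv[OF cA E])
    finally show ?thesis using pos[of s] pos[of t] by simp
  qed
  have opb: "\<And>M x. N (M *v x) \<le> op_norm N M * N x" by (rule op_norm_bound[OF N])
  have Nnn: "\<And>x. 0 \<le> N x" using N by (simp add: isn_nonneg)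
  have key: "N (\<Phi> t s *v \<xi>) * \<mu> t powr (-\<gamma>) = \<mu> s powr (-\<gamma>) * N (\<Psi> t s *v \<xi>)" for t s \<xi>
  proof -
    have "\<Psi> t s *v \<xi> = (\<mu> s powr \<gamma> / \<mu> t powr \<gamma>) *\<^sub>R (\<Phi> t s *v \<xi>)"
      by (simp add: scaled[OF cA E mu E2, of t s] scaleR_matrix_vector_assoc[symmetric])
    hence "N (\<Psi> t s *v \<xi>) = (\<mu> s powr \<gamma> / \<mu> t powr \<gamma>) * N (\<Phi> t s *v \<xi>)"
      by (simp add: isn_scale[OF N])
    thus ?thesis using pos[of s] pos[of t] by (simp add: powr_minus field_simps)
  qed
  define fb where "fb s \<xi> \<longleftrightarrow> (\<exists>C. \<forall>t\<in>{0..}. N (\<Psi> t s *v \<xi>) \<le> C)" for s \<xi>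
  define bb where "bb s \<xi> \<longleftrightarrow> (\<exists>C. \<forall>t\<in>{..0}. N (\<Psi> t s *v \<xi>) \<le> C)" for s \<xi>
  have Uiff: "(s, \<xi>) \<in> U_set N \<mu> \<Phi> \<gamma> \<longleftrightarrow> fb s \<xi>" for s \<xi>
  proof -
    have "(s, \<xi>) \<in> U_set N \<mu> \<Phi> \<gamma> \<longleftrightarrow> (\<exists>C. \<forall>t\<in>{0..}. \<mu> s powr (-\<gamma>) * N (\<Psi> t s *v \<xi>) \<le> C)"
      by (simp add: U_set_def key Ball_def)
    also have "\<dots> \<longleftrightarrow> fb s \<xi>" unfolding fb_def by (rule ex_bound_scale) (simp add: pos less_imp_neq[OF pos, symmetric])
    finally show ?thesis .
  qed
  have Viff: "(s, \<xi>) \<in> V_set N \<mu> \<Phi> \<gamma> \<longleftrightarrow> bb s \<xi>" for s \<xi>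
  proof -
    have "(s, \<xi>) \<in> V_set N \<mu> \<Phi> \<gamma> \<longleftrightarrow> (\<exists>C. \<forall>t\<in>{..0}. \<mu> s powr (-\<gamma>) * N (\<Psi> t s *v \<xi>) \<le> C)"
      by (simp add: V_set_def key Ball_def)
    also have "\<dots> \<longleftrightarrow> bb s \<xi>" unfolding bb_def by (rule ex_bound_scale) (simp add: pos less_imp_neq[OF pos, symmetric])
    finally show ?thesis .
  qed
  have ratio_le1: "(\<mu> t / \<mu> s) powr \<alpha> \<le> 1" if "s \<le> t" for s t
  proof -
    have "1 \<le> \<mu> t / \<mu> s" using mono[OF that] pos[of s] by simp
    hence "(\<mu> t / \<mu> s) powr \<alpha> \<le> (\<mu> t / \<mu> s) powr 0" using al by (intro powr_mono) auto
    thus ?thesis using pos[of s] pos[of t] by simp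
  qed
  have ratio_le1b: "(\<mu> t / \<mu> s) powr \<beta> \<le> 1" if "t \<le> s" for s t
    using mono[OF that] pos[of s] pos[of t] be by (intro powr_le1) auto
  have U1: "fb s (P s *v x)" for s x
  proof -
    define \<xi> where "\<xi> = P s *v x"
    have P\<xi>: "P s *v \<xi> = \<xi>" by (simp add: \<xi>_def Pidem)
    obtain B where B: "\<forall>\<tau>\<in>{0..\<bar>s\<bar>}. N (\<Psi> \<tau> s *v \<xi>) \<le> B" using bounded_interval_N[OF N E2] by blast
    define C0 where "C0 = K * \<mu> s powr (sgn s * \<theta>) * N \<xi>"
    have "N (\<Psi> t s *v \<xi>) \<le> max B C0" if t0: "t \<in> {0..}" for t
    proof (cases "t \<le> s")
      case True
      hence "t \<in> {0..\<bar>s\<bar>}" using t0 by auto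
      thus ?thesis using B by fastforce
    next
      case False
      hence st: "s \<le> t" by simp
      have "N (\<Psi> t s *v \<xi>) = N ((\<Psi> t s ** P s) *v \<xi>)" by (simp add: matrix_vector_mul_assoc[symmetric] P\<xi>)
      also have "\<dots> \<le> op_norm N (\<Psi> t s ** P s) * N \<xi>" by (rule opb)
      also have "\<dots> \<le> (K * (\<mu> t / \<mu> s) powr \<alpha> * \<mu> s powr (sgn s * \<theta>)) * N \<xi>"
        by (rule mult_right_mono[OF dP[OF st] Nnn])
      also have "\<dots> \<le> C0" unfolding C0_def using ratio_le1[OF st] K Nnn[of \<xi>]
        by (intro mult_right_mono) (auto intro!: mult_right_mono[where c="\<mu> s powr (sgn s * \<theta>)", simplified])
      finally show ?thesis by simp
    qed
    thus ?thesis unfolding fb_def \<xi>_def by blast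
  qed
  have U2: "P s *v \<xi> = \<xi>" if fb: "fb s \<xi>" for s \<xi>
  proof -
    define \<eta> where "\<eta> = \<xi> - P s *v \<xi>"
    have P\<eta>: "P s *v \<eta> = 0" by (simp add: \<eta>_def matrix_vector_mult_diff_distrib Pidem)
    obtain C where C: "\<forall>t\<in>{0..}. N (\<Psi> t s *v \<xi>) \<le> C" using fb unfolding fb_def by blast
    obtain C1 where C1: "\<forall>t\<in>{0..}. N (\<Psi> t s *v (P s *v \<xi>)) \<le> C1" using U1[of s \<xi>] unfolding fb_def by blast
    have bd: "N (\<Psi> t s *v \<eta>) \<le> C + C1" if "t \<ge> 0" for t
    proof -
      have eq: "\<Psi> t s *v \<eta> = \<Psi> t s *v \<xi> - \<Psi> t s *v (P s *v \<xi>)" by (simp add: \<eta>_def matrix_vector_mult_diff_distrib)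
      moreover have "N (\<Psi> t s *v \<xi>) \<le> C" "N (\<Psi> t s *v (P s *v \<xi>)) \<le> C1" using C C1 that by auto
      ultimately show ?thesis unfolding eq using isn_diff[OF N, of "\<Psi> t s *v \<xi>" "\<Psi> t s *v (P s *v \<xi>)"] by linarith
    qed
    define g where "g t = K * (C + C1) * \<mu> s powr \<beta> * \<mu> t powr (\<nu> - \<beta>)" for t
    have ev: "eventually (\<lambda>t. N \<eta> \<le> g t) at_top"
      using eventually_ge_at_top[of "max 1 s"]
    proof eventually_elim
      case (elim t)
      hence st: "s \<le> t" and t0: "t > 0" by auto
      define w where "w = \<Psi> t s *v \<eta>"
      have Pw: "P t *v w = 0" by (simp add: w_def Pinv P\<eta>)
      have "\<eta> = \<Psi> s t *v w" by (simp add: w_def Psinv)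
      also have "\<dots> = (\<Psi> s t ** (mat 1 - P t)) *v w"
        by (simp add: matrix_vector_mul_assoc[symmetric] matrix_vector_mult_diff_distrib Pw
             matrix_vector_mult_diff_rdistrib)
      finally have "N \<eta> = N ((\<Psi> s t ** (mat 1 - P t)) *v w)" by simp
      also have "\<dots> \<le> op_norm N (\<Psi> s t ** (mat 1 - P t)) * N w" by (rule opb)
      also have "\<dots> \<le> (K * (\<mu> s / \<mu> t) powr \<beta> * \<mu> t powr (sgn t * \<nu>)) * N w"
        by (rule mult_right_mono[OF dQ[OF st] Nnn])
      also have "\<dots> \<le> (K * (\<mu> s / \<mu> t) powr \<beta> * \<mu> t powr (sgn t * \<nu>)) * (C + C1)"
        using bd[of t] t0 K by (intro mult_left_mono) (auto simp: w_def)
      also have "\<dots> = g t" unfolding g_def using t0 pos[of s] pos[of t]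
        by (simp add: powr_divide powr_diff)
      finally show ?case .
    qed
    have lim: "(g \<longlongrightarrow> 0) at_top"
    proof -
      have "((\<lambda>t. \<mu> t powr (\<nu> - \<beta>)) \<longlongrightarrow> 0) at_top"
        using bn by (intro tendsto_neg_powr lim_top) auto
      from tendsto_mult[OF tendsto_const this, of "K * (C + C1) * \<mu> s powr \<beta>"]
      show ?thesis by (simp add: g_def[abs_def])
    qed
    have "N \<eta> \<le> 0" by (rule tendsto_le[OF trivial_limit_at_top_linorder lim tendsto_const ev])
    hence "\<eta> = 0" using Nnn[of \<eta>] isn_eq0[OF N, of \<eta>] by simp
    thus ?thesis by (simp add: \<eta>_def)
  qed
  have V1: "bb s \<xi>" if P0: "P s *v \<xi> = 0" for s \<xi>
  proof -
    have Q\<xi>: "(mat 1 - P s) *v \<xi> = \<xi>" by (simp add: matrix_vector_mult_diff_rdistrib P0)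
    obtain B where B: "\<forall>\<tau>\<in>{-\<bar>s\<bar>..0}. N (\<Psi> \<tau> s *v \<xi>) \<le> B" using bounded_interval_N[OF N E2] by blast
    define C0 where "C0 = K * \<mu> s powr (sgn s * \<nu>) * N \<xi>"
    have "N (\<Psi> t s *v \<xi>) \<le> max B C0" if t0: "t \<in> {..0}" for t
    proof (cases "s \<le> t")
      case True
      hence "t \<in> {-\<bar>s\<bar>..0}" using t0 by auto
      thus ?thesis using B by fastforce
    next
      case False
      hence st: "t \<le> s" by simp
      have "N (\<Psi> t s *v \<xi>) = N ((\<Psi> t s ** (mat 1 - P s)) *v \<xi>)" by (simp add: matrix_vector_mul_assoc[symmetric] Q\<xi>)
      also have "\<dots> \<le> op_norm N (\<Psi> t s ** (mat 1 - P s)) * N \<xi>" by (rule opb)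
      also have "\<dots> \<le> (K * (\<mu> t / \<mu> s) powr \<beta> * \<mu> s powr (sgn s * \<nu>)) * N \<xi>"
        by (rule mult_right_mono[OF dQ[OF st] Nnn])
      also have "\<dots> \<le> C0" unfolding C0_def using ratio_le1b[OF st] K Nnn[of \<xi>]
        by (intro mult_right_mono) (auto intro!: mult_right_mono[where c="\<mu> s powr (sgn s * \<nu>)", simplified])
      finally show ?thesis by simp
    qed
    thus ?thesis unfolding bb_def by blast
  qed
  have V2: "P s *v \<xi> = 0" if bb: "bb s \<xi>" for s \<xi>
  proof -
    define \<eta> where "\<eta> = P s *v \<xi>"
    have P\<eta>: "P s *v \<eta> = \<eta>" by (simp add: \<eta>_def Pidem)
    obtain C where C: "\<forall>t\<in>{..0}. N (\<Psi> t s *v \<xi>) \<le> C" using bb unfolding bb_def by blast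
    have "P s *v (\<xi> - \<eta>) = 0" by (simp add: \<eta>_def matrix_vector_mult_diff_distrib Pidem)
    then obtain C1 where C1: "\<forall>t\<in>{..0}. N (\<Psi> t s *v (\<xi> - \<eta>)) \<le> C1" using V1 unfolding bb_def by blast
    have bd: "N (\<Psi> t s *v \<eta>) \<le> C + C1" if "t \<le> 0" for t
    proof -
      have eq: "\<Psi> t s *v \<eta> = \<Psi> t s *v \<xi> - \<Psi> t s *v (\<xi> - \<eta>)" by (simp add: matrix_vector_mult_diff_distrib)
      moreover have "N (\<Psi> t s *v \<xi>) \<le> C" "N (\<Psi> t s *v (\<xi> - \<eta>)) \<le> C1" using C C1 that by auto
      ultimately show ?thesis unfolding eq using isn_diff[OF N, of "\<Psi> t s *v \<xi>" "\<Psi> t s *v (\<xi> - \<eta>)"] by linarith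
    qed
    define g where "g t = K * (C + C1) * \<mu> s powr \<alpha> * \<mu> t powr (- \<theta> - \<alpha>)" for t
    have ev: "eventually (\<lambda>t. N \<eta> \<le> g t) at_bot"
      using eventually_le_at_bot[of "min (-1) s"]
    proof eventually_elim
      case (elim t)
      hence st: "t \<le> s" and t0: "t < 0" by auto
      define w where "w = \<Psi> t s *v \<eta>"
      have Pw: "P t *v w = w" by (simp add: w_def Pinv P\<eta>)
      have "\<eta> = \<Psi> s t *v w" by (simp add: w_def Psinv)
      also have "\<dots> = (\<Psi> s t ** P t) *v w"
        by (simp add: matrix_vector_mul_assoc[symmetric] Pw)
      finally have "N \<eta> = N ((\<Psi> s t ** P t) *v w)" by simp
      also have "\<dots> \<le> op_norm N (\<Psi> s t ** P t) * N w" by (rule opb)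
      also have "\<dots> \<le> (K * (\<mu> s / \<mu> t) powr \<alpha> * \<mu> t powr (sgn t * \<theta>)) * N w"
        by (rule mult_right_mono[OF dP[OF st] Nnn])
      also have "\<dots> \<le> (K * (\<mu> s / \<mu> t) powr \<alpha> * \<mu> t powr (sgn t * \<theta>)) * (C + C1)"
        using bd[of t] t0 K by (intro mult_left_mono) (auto simp: w_def)
      also have "\<dots> = g t" unfolding g_def using t0 pos[of s] pos[of t]
        by (simp add: powr_divide powr_diff powr_minus field_simps)
      finally show ?case .
    qed
    have lim: "(g \<longlongrightarrow> 0) at_bot"
    proof -
      have "((\<lambda>t. \<mu> t powr (- \<theta> - \<alpha>)) \<longlongrightarrow> 0) at_bot"
        using at pos by (intro tendsto_zero_powrI lim_bot tendsto_const always_eventually allI) (auto intro: less_imp_le)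
      from tendsto_mult[OF tendsto_const this, of "K * (C + C1) * \<mu> s powr \<alpha>"]
      show ?thesis by (simp add: g_def[abs_def])
    qed
    have "N \<eta> \<le> 0" by (rule tendsto_le[OF trivial_limit_at_bot_linorder lim tendsto_const ev])
    hence "\<eta> = 0" using Nnn[of \<eta>] isn_eq0[OF N, of \<eta>] by simp
    thus ?thesis by (simp add: \<eta>_def)
  qed
  have U: "U_set N \<mu> \<Phi> \<gamma> = {(s, \<xi>). \<xi> \<in> range (\<lambda>x. P s *v x)}"
  proof (rule set_eqI)
    fix z :: "real \<times> (real^'n)"
    obtain s \<xi> where z: "z = (s, \<xi>)" by fastforce
    have "z \<in> U_set N \<mu> \<Phi> \<gamma> \<longleftrightarrow> \<xi> \<in> range (\<lambda>x. P s *v x)"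
    proof
      assume "z \<in> U_set N \<mu> \<Phi> \<gamma>"
      hence "fb s \<xi>" using Uiff z by simp
      hence "\<xi> = P s *v \<xi>" using U2 by simp
      thus "\<xi> \<in> range (\<lambda>x. P s *v x)" by (metis rangeI)
    next
      assume "\<xi> \<in> range (\<lambda>x. P s *v x)"
      then obtain x where "\<xi> = P s *v x" by blast
      thus "z \<in> U_set N \<mu> \<Phi> \<gamma>" using Uiff U1 z by simp
    qed
    thus "z \<in> U_set N \<mu> \<Phi> \<gamma> \<longleftrightarrow> z \<in> {(s, \<xi>). \<xi> \<in> range (\<lambda>x. P s *v x)}" using z by simp
  qed
  have V: "V_set N \<mu> \<Phi> \<gamma> = {(s, \<xi>). P s *v \<xi> = 0}"
  proof (rule set_eqI)
    fix z :: "real \<times> (real^'n)"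
    obtain s \<xi> where z: "z = (s, \<xi>)" by fastforce
    have "z \<in> V_set N \<mu> \<Phi> \<gamma> \<longleftrightarrow> P s *v \<xi> = 0" using Viff[of s \<xi>] V1[of s \<xi>] V2[of s \<xi>] z by blast
    thus "z \<in> V_set N \<mu> \<Phi> \<gamma> \<longleftrightarrow> z \<in> {(s, \<xi>). P s *v \<xi> = 0}" using z by simp
  qed
  have D: "fib_dsum (U_set N \<mu> \<Phi> \<gamma>) (V_set N \<mu> \<Phi> \<gamma>) = UNIV"
  proof (rule set_eqI)
    fix z :: "real \<times> (real^'n)"
    obtain s \<xi> where z: "z = (s, \<xi>)" by fastforce
    have fU: "fiber (U_set N \<mu> \<Phi> \<gamma>) s = range (\<lambda>x. P s *v x)" by (simp add: U fiber_def)
    have fV: "fiber (V_set N \<mu> \<Phi> \<gamma>) s = {\<xi>. P s *v \<xi> = 0}" by (simp add: V fiber_def)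
    have "\<xi> = P s *v \<xi> + (\<xi> - P s *v \<xi>)" by simp
    moreover have "P s *v (\<xi> - P s *v \<xi>) = 0" by (simp add: matrix_vector_mult_diff_distrib Pidem)
    ultimately have s1: "\<xi> \<in> {u + v |u v. u \<in> fiber (U_set N \<mu> \<Phi> \<gamma>) s \<and> v \<in> fiber (V_set N \<mu> \<Phi> \<gamma>) s}"
      unfolding fU fV by blast
    have s2: "fiber (U_set N \<mu> \<Phi> \<gamma>) s \<inter> fiber (V_set N \<mu> \<Phi> \<gamma>) s = {0}"
    proof -
      have "0 \<in> range (\<lambda>x. P s *v x)" by (rule range_eqI[of _ _ 0]) simp
      thus ?thesis unfolding fU fV by (auto simp: Pidem)
    qed
    show "z \<in> fib_dsum (U_set N \<mu> \<Phi> \<gamma>) (V_set N \<mu> \<Phi> \<gamma>) \<longleftrightarrow> z \<in> UNIV"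
      using s1 s2 z by (simp add: fib_dsum_def)
  qed
  show ?thesis using U V D by blast
qed


end
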